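(* Let $m\ge 3$ and $H=\Theta(l_1,\ldots,l_m)$ with $l_1\ge 2$ and $l_2\ge 4$, and let $G=H^2$. Then $G$ is equitably $k$-choosable for every $k$ with $m+3\le k\le 2m+1$.
   Context: All graphs are finite and simple. $\Theta(l_1,\ldots,l_m)$, with $l_1\le\cdots\le l_m$, denotes the graph consisting of two vertices $u,w$ joined by $m$ internally disjoint paths of lengths $l_1,\ldots,l_m$; the $i$th path is $u, v_{i,1},\ldots,v_{i,l_i-1}, w$. For a graph $H$, $H^2$ has vertex set $V(H)$ with two vertices adjacent iff their distance in $H$ is 1 or 2. A $k$-assignment $L$ assigns to each vertex a set of exactly $k$ colors; an equitable $L$-coloring of $G$ is a proper coloring $f$ with $f(v)\in L(v)$ such that no color is used more than $\lceil |V(G)|/k\rceil$ times; $G$ is equitably $k$-choosable if it has an equitable $L$-coloring for every $k$-assignment $L$. *)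

theory Defs
  imports Complex_Main
begin

text \<open>Generic graph notions: a graph is a finite vertex set V with a symmetric
irreflexive adjacency relation adj.\<close>

definition k_assignment :: "'a set \<Rightarrow> nat \<Rightarrow> ('a \<Rightarrow> nat set) \<Rightarrow> bool" where
  "k_assignment V k L \<longleftrightarrow> (\<forall>v\<in>V. finite (L v) \<and> card (L v) = k)"

definition equitable_L_coloring ::
  "'a set \<Rightarrow> ('a \<Rightarrow> 'a \<Rightarrow> bool) \<Rightarrow> nat \<Rightarrow> ('a \<Rightarrow> nat set) \<Rightarrow> ('a \<Rightarrow> nat) \<Rightarrow> bool" where
  "equitable_L_coloring V adj k L f \<longleftrightarrow>
     (\<forall>v\<in>V. f v \<in> L v) \<and>
     (\<forall>x\<in>V. \<forall>y\<in>V. adj x y \<longrightarrow> f x \<noteq> f y) \<and>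
     (\<forall>c. real (card {v\<in>V. f v = c}) \<le> of_int \<lceil>real (card V) / real k\<rceil>)"

definition equitably_choosable :: "'a set \<Rightarrow> ('a \<Rightarrow> 'a \<Rightarrow> bool) \<Rightarrow> nat \<Rightarrow> bool" where
  "equitably_choosable V adj k \<longleftrightarrow>
     (\<forall>L. k_assignment V k L \<longrightarrow> (\<exists>f. equitable_L_coloring V adj k L f))"

definition graph_square :: "'a set \<Rightarrow> ('a \<Rightarrow> 'a \<Rightarrow> bool) \<Rightarrow> 'a \<Rightarrow> 'a \<Rightarrow> bool" where
  "graph_square V adj x y \<longleftrightarrow> x \<in> V \<and> y \<in> V \<and> x \<noteq> y \<and>
     (adj x y \<or> (\<exists>z\<in>V. adj x z \<and> adj z y))"

text \<open>Theta graph Theta(l_1,...,l_m), lengths given as a list l (path i is indexed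
by i < length l, 0-based). Vertices: TU = u, TW = w, TV i j = v_{i,j} for 1 \<le> j < l!i.\<close>
datatype theta_vertex = TU | TW | TV nat nat

definition theta_pos :: "nat list \<Rightarrow> nat \<Rightarrow> nat \<Rightarrow> theta_vertex" where
  "theta_pos l i j = (if j = 0 then TU else if j = l ! i then TW else TV i j)"

definition theta_verts :: "nat list \<Rightarrow> theta_vertex set" where
  "theta_verts l = {TU, TW} \<union> {TV i j | i j. i < length l \<and> 1 \<le> j \<and> j < l ! i}"

definition theta_adj :: "nat list \<Rightarrow> theta_vertex \<Rightarrow> theta_vertex \<Rightarrow> bool" where
  "theta_adj l x y \<longleftrightarrow> (\<exists>i < length l. \<exists>j < l ! i.
      (x = theta_pos l i j \<and> y = theta_pos l i (Suc j)) \<or>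
      (y = theta_pos l i j \<and> x = theta_pos l i (Suc j)))"

end

theory Submission
  imports Defs
begin


lemma ceil_ge:
  fixes n k q :: nat
  assumes "k > 0" "q * k < n + k"
  shows "real q \<le> of_int \<lceil>real n / real k\<rceil>"
proof -
  have "real q * real k < real n + real k" using assms(2) by (metis of_nat_add of_nat_less_iff of_nat_mult)
  hence "(real q - 1) * real k < real n" by (simp add: algebra_simps)
  hence "real q - 1 < real n / real k" using assms(1) by (simp add: field_simps)
  hence "int q \<le> \<lceil>real n / real k\<rceil>" by (simp add: le_ceiling_iff)
  thus ?thesis by (metis of_int_of_nat_eq of_int_le_iff)
qed

lemma divA: assumes "(a::nat) div k = b div k" "k > 0" shows "a < b + k"
proof -
  have 1: "b div k * k + a mod k = a" using div_mult_mod_eq[of a k] assms(1) by simp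
  have 2: "b div k * k \<le> b" by (rule div_times_less_eq_dividend)
  have 3: "a mod k < k" using assms(2) by simp
  show ?thesis using 1 2 3 by linarith
qed

lemma divB: assumes "(r::nat) < N" "k > 0" shows "r div k < (N + k - 1) div k"
proof -
  have "r div k \<le> (N - 1) div k" using assms by (intro div_le_mono) simp
  moreover have "N + k - 1 = (N - 1) + k" using assms by simp
  moreover have "((N - 1) + k) div k = (N - 1) div k + 1" using assms(2) div_add_self2[of k "N - 1"] by simp
  ultimately show ?thesis by simp
qed

lemma generic:
  fixes V :: "'a set" and adj :: "'a \<Rightarrow> 'a \<Rightarrow> bool" and k :: nat
    and phi :: "nat \<Rightarrow> 'a" and pos :: "'a \<Rightarrow> int"
  assumes finV: "finite V"
    and sym: "\<And>x y. adj x y \<Longrightarrow> adj y x"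
    and irr: "\<And>x. \<not> adj x x"
    and kpos: "k > 0"
    and injphi: "inj_on phi {0..<k}"
    and phiV: "phi ` {0..<k} \<subseteq> V"
    and Kc: "\<And>j. j < k \<Longrightarrow> card {y \<in> V - phi ` {0..<k}. adj (phi j) y} + j < k"
    and injpos: "inj_on pos (V - phi ` {0..<k})"
    and band: "\<And>x y. x \<in> V - phi ` {0..<k} \<Longrightarrow> y \<in> V - phi ` {0..<k} \<Longrightarrow> adj x y \<Longrightarrow> \<bar>pos x - pos y\<bar> < int k"
  shows "equitably_choosable V adj k"
  unfolding equitably_choosable_def
proof (intro allI impI)
  fix L assume LA: "k_assignment V k L"
  define F where "F = phi ` {0..<k}"
  define R where "R = V - F"
  define rk where "rk x = card {y \<in> R. pos y < pos x}" for x
  have finR: "finite R" using finV R_def by auto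
  have Lx: "finite (L x) \<and> card (L x) = k" if "x \<in> V" for x
    using LA that unfolding k_assignment_def by auto
  have rk_lt: "rk x < card R" if "x \<in> R" for x
  proof -
    have "{y \<in> R. pos y < pos x} \<subset> R" using that by auto
    thus ?thesis unfolding rk_def using finR by (simp add: psubset_card_mono)
  qed
  have rk_mono: "rk x < rk y" if "x \<in> R" "y \<in> R" "pos x < pos y" for x y
  proof -
    have "{z \<in> R. pos z < pos x} \<subset> {z \<in> R. pos z < pos y}" using that by auto
    thus ?thesis unfolding rk_def using finR by (intro psubset_card_mono) auto
  qed
  have injR: "inj_on pos R" using injpos R_def F_def by simp
  have rk_inj: "x = y" if "x \<in> R" "y \<in> R" "rk x = rk y" for x y
  proof (rule ccontr)
    assume "x \<noteq> y"
    hence "pos x \<noteq> pos y" using injR that(1,2) unfolding inj_on_def by blast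
    then consider "pos x < pos y" | "pos y < pos x" by linarith
    thus False using rk_mono that by (metis less_irrefl)
  qed
  have rk_diff: "rk y \<le> rk x + nat (pos y - pos x)" if "x \<in> R" "y \<in> R" "pos x \<le> pos y" for x y
  proof -
    let ?B = "{z \<in> R. pos x \<le> pos z \<and> pos z < pos y}"
    have "{z \<in> R. pos z < pos y} \<subseteq> {z \<in> R. pos z < pos x} \<union> ?B" by auto
    hence "rk y \<le> card ({z \<in> R. pos z < pos x} \<union> ?B)"
      unfolding rk_def using finR by (intro card_mono) auto
    also have "\<dots> \<le> rk x + card ?B"
      unfolding rk_def by (rule card_Un_le)
    also have "card ?B \<le> card {pos x..<pos y}"
    proof -
      have "card ?B = card (pos ` ?B)"
        using injR by (intro card_image[symmetric]) (auto intro: inj_on_subset)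
      also have "\<dots> \<le> card {pos x..<pos y}" by (intro card_mono) auto
      finally show ?thesis .
    qed
    finally show ?thesis by simp
  qed
  have rk_close: "rk y < rk x + k" if "x \<in> R" "y \<in> R" "\<bar>pos x - pos y\<bar> < int k" for x y
  proof (cases "pos y \<le> pos x")
    case True
    hence "rk y \<le> rk x"
      using rk_mono[OF that(2,1)] by (cases "pos y = pos x") (auto simp: rk_def)
    thus ?thesis using kpos by linarith
  next
    case False
    hence "rk y \<le> rk x + nat (pos y - pos x)" using rk_diff that by simp
    moreover have "nat (pos y - pos x) < k" using that(3) False by linarith
    ultimately show ?thesis by linarith
  qed
  have gex: "\<exists>g. (\<forall>x\<in>R. rk x < n \<longrightarrow> g x \<in> L x) \<and>
      (\<forall>x\<in>R. \<forall>y\<in>R. rk x < n \<longrightarrow> rk y < n \<longrightarrow> x \<noteq> y \<longrightarrow> rk y < rk x + k \<longrightarrow> rk x < rk y + k \<longrightarrow> g x \<noteq> g y)" for n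
  proof (induction n)
    case 0 show ?case by auto
  next
    case (Suc n)
    then obtain g where g1: "\<forall>x\<in>R. rk x < n \<longrightarrow> g x \<in> L x"
      and g2: "\<forall>x\<in>R. \<forall>y\<in>R. rk x < n \<longrightarrow> rk y < n \<longrightarrow> x \<noteq> y \<longrightarrow> rk y < rk x + k \<longrightarrow> rk x < rk y + k \<longrightarrow> g x \<noteq> g y"
      by blast
    show ?case
    proof (cases "\<exists>x\<in>R. rk x = n")
      case False
      hence "\<forall>x\<in>R. rk x < Suc n \<longrightarrow> rk x < n" by (auto simp: less_Suc_eq)
      thus ?thesis using g1 g2 by metis
    next
      case True
      then obtain x where x: "x \<in> R" "rk x = n" by blast
      define Y where "Y = {y \<in> R. rk y < n \<and> n < rk y + k}"
      have "rk ` Y \<subseteq> {n + 1 - k..<n}" unfolding Y_def by auto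
      moreover have "inj_on rk Y" using rk_inj unfolding Y_def inj_on_def by blast
      ultimately have "card Y \<le> card {n + 1 - k..<n}" by (intro card_inj_on_le) auto
      hence cY: "card Y < k" using kpos by simp
      have finY: "finite Y" using finR unfolding Y_def by auto
      have "card (g ` Y) < card (L x)"
        using cY Lx x(1) R_def card_image_le[OF finY, of g] by auto
      hence "\<not> L x \<subseteq> g ` Y" using finY by (meson card_mono finite_imageI not_le)
      then obtain c where c: "c \<in> L x" "c \<notin> g ` Y" by blast
      define g' where "g' = g(x := c)"
      have "\<forall>z\<in>R. rk z < Suc n \<longrightarrow> g' z \<in> L z"
      proof (intro ballI impI)
        fix z assume z: "z \<in> R" "rk z < Suc n"
        show "g' z \<in> L z"
        proof (cases "z = x")
          case True thus ?thesis using c g'_def by simp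
        next
          case False
          hence "rk z \<noteq> n" using rk_inj x z by metis
          thus ?thesis using g1 z False g'_def by simp
        qed
      qed
      moreover have "\<forall>z1\<in>R. \<forall>z2\<in>R. rk z1 < Suc n \<longrightarrow> rk z2 < Suc n \<longrightarrow> z1 \<noteq> z2 \<longrightarrow> rk z2 < rk z1 + k \<longrightarrow> rk z1 < rk z2 + k \<longrightarrow> g' z1 \<noteq> g' z2"
      proof (intro ballI impI)
        fix z1 z2 assume h: "z1 \<in> R" "z2 \<in> R" "rk z1 < Suc n" "rk z2 < Suc n" "z1 \<noteq> z2"
          "rk z2 < rk z1 + k" "rk z1 < rk z2 + k"
        show "g' z1 \<noteq> g' z2"
        proof (cases "z1 = x")
          case True
          hence "z2 \<noteq> x" using h by simp
          hence "rk z2 \<noteq> n" using rk_inj x h by metis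
          hence "z2 \<in> Y" using h True x unfolding Y_def by auto
          thus ?thesis using True \<open>z2 \<noteq> x\<close> c g'_def by auto
        next
          case False
          note F1 = False
          hence r1: "rk z1 \<noteq> n" using rk_inj x h by metis
          show ?thesis
          proof (cases "z2 = x")
            case True
            hence "z1 \<in> Y" using h r1 x unfolding Y_def by auto
            thus ?thesis using True F1 c g'_def by auto
          next
            case False
            hence "rk z2 \<noteq> n" using rk_inj x h by metis
            thus ?thesis using g2 h r1 F1 False g'_def by auto
          qed
        qed
      qed
      ultimately show ?thesis by blast
    qed
  qed
  obtain g where g1: "\<forall>x\<in>R. g x \<in> L x"
    and g2: "\<forall>x\<in>R. \<forall>y\<in>R. x \<noteq> y \<longrightarrow> rk y < rk x + k \<longrightarrow> rk x < rk y + k \<longrightarrow> g x \<noteq> g y"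
    using gex[of "card R"] rk_lt by blast
  have phiF: "phi j \<notin> R" if "j < k" for j using that unfolding R_def F_def by auto
  have fex: "\<exists>f. (\<forall>x\<in>R. f x = g x) \<and> (\<forall>j'<j. f (phi j') \<in> L (phi j') \<and>
       (\<forall>y\<in>R. adj (phi j') y \<longrightarrow> f (phi j') \<noteq> g y) \<and> (\<forall>j''<j'. f (phi j') \<noteq> f (phi j'')))"
    if "j \<le> k" for j
    using that
  proof (induction j)
    case 0 show ?case by auto
  next
    case (Suc j)
    hence jk: "j < k" by simp
    then obtain f where f1: "\<forall>x\<in>R. f x = g x"
      and f2: "\<forall>j'<j. f (phi j') \<in> L (phi j') \<and>
       (\<forall>y\<in>R. adj (phi j') y \<longrightarrow> f (phi j') \<noteq> g y) \<and> (\<forall>j''<j'. f (phi j') \<noteq> f (phi j''))"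
      using Suc by auto
    define x where "x = phi j"
    define Fb where "Fb = g ` {y \<in> R. adj x y} \<union> f ` phi ` {0..<j}"
    have "card Fb \<le> card (g ` {y \<in> R. adj x y}) + card (f ` phi ` {0..<j})"
      unfolding Fb_def by (rule card_Un_le)
    also have "\<dots> \<le> card {y \<in> R. adj x y} + j"
    proof (intro add_mono)
      show "card (g ` {y \<in> R. adj x y}) \<le> card {y \<in> R. adj x y}"
        using finR by (intro card_image_le) auto
      have "card (f ` phi ` {0..<j}) \<le> card (phi ` {0..<j})" by (intro card_image_le) auto
      also have "\<dots> \<le> card {0..<j}" by (intro card_image_le) auto
      finally show "card (f ` phi ` {0..<j}) \<le> j" by simp
    qed
    also have "\<dots> < k" using Kc[OF jk] unfolding x_def R_def F_def by simp
    finally have cFb: "card Fb < k" .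
    have xV: "x \<in> V" using phiV jk x_def by auto
    have finFb: "finite Fb" unfolding Fb_def using finR by auto
    have "\<not> L x \<subseteq> Fb" using cFb Lx[OF xV] finFb by (meson card_mono not_le)
    then obtain c where c: "c \<in> L x" "c \<notin> Fb" by blast
    define f' where "f' = f(x := c)"
    have xnR: "x \<notin> R" using phiF jk x_def by simp
    have neq: "phi j' \<noteq> x" if "j' < j" for j'
      using injphi that jk x_def unfolding inj_on_def by fastforce
    show ?case
    proof (intro exI conjI allI impI ballI)
      fix y assume "y \<in> R" thus "f' y = g y" using f1 xnR f'_def by auto
    next
      fix j' assume j': "j' < Suc j"
      show "f' (phi j') \<in> L (phi j')"
        using j' f2 c x_def f'_def neq by (cases "j' = j") auto
    next
      fix j' y assume j': "j' < Suc j" and y: "y \<in> R" "adj (phi j') y"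
      show "f' (phi j') \<noteq> g y"
      proof (cases "j' = j")
        case True thus ?thesis using c y x_def f'_def Fb_def by auto
      next
        case False thus ?thesis using f2 j' y neq f'_def by auto
      qed
    next
      fix j' j'' assume j': "j' < Suc j" and j'': "j'' < j'"
      show "f' (phi j') \<noteq> f' (phi j'')"
      proof (cases "j' = j")
        case True
        have "f (phi j'') \<in> Fb" unfolding Fb_def using j'' True by auto
        thus ?thesis using True c j'' neq x_def f'_def by auto
      next
        case False
        thus ?thesis using f2 j' j'' neq f'_def by auto
      qed
    qed
  qed
  obtain f where f1: "\<forall>x\<in>R. f x = g x"
    and f2: "\<forall>j'<k. f (phi j') \<in> L (phi j') \<and>
       (\<forall>y\<in>R. adj (phi j') y \<longrightarrow> f (phi j') \<noteq> g y) \<and> (\<forall>j''<j'. f (phi j') \<noteq> f (phi j''))"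
    using fex[of k] by auto
  have Fdist: "f (phi a) \<noteq> f (phi b)" if "a < k" "b < k" "a \<noteq> b" for a b
    using f2 that by (metis linorder_neqE_nat)
  have VRF: "V = R \<union> F" using phiV unfolding R_def F_def by auto
  show "\<exists>f. equitable_L_coloring V adj k L f"
  proof (intro exI)
    show "equitable_L_coloring V adj k L f"
      unfolding equitable_L_coloring_def
    proof (intro conjI ballI allI impI)
      fix v assume "v \<in> V"
      thus "f v \<in> L v" using VRF f1 g1 f2 unfolding F_def by auto
    next
      fix x y assume xy: "x \<in> V" "y \<in> V" "adj x y"
      show "f x \<noteq> f y"
      proof (cases "x \<in> R")
        case xR: True
        show ?thesis
        proof (cases "y \<in> R")
          case yR: True
          have "x \<noteq> y" using irr xy by metis
          moreover have "\<bar>pos x - pos y\<bar> < int k" using band xR yR xy R_def F_def by auto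
          moreover have "\<bar>pos y - pos x\<bar> < int k" using calculation by linarith
          ultimately show ?thesis using g2 xR yR f1 rk_close by metis
        next
          case False
          then obtain b where b: "b < k" "y = phi b" using xy VRF F_def by auto
          have "f (phi b) \<noteq> g x" using f2 b(1) sym[OF xy(3)] xR b(2) by blast
          thus ?thesis using b xR f1 by auto
        qed
      next
        case False
        then obtain a where a: "a < k" "x = phi a" using xy VRF F_def by auto
        show ?thesis
        proof (cases "y \<in> R")
          case True thus ?thesis using f2 a xy f1 by auto
        next
          case False
          then obtain b where b: "b < k" "y = phi b" using xy VRF F_def by auto
          have "a \<noteq> b" using a b irr xy by metis
          thus ?thesis using Fdist a b by auto
        qed
      qed
    next
      fix c
      define N where "N = card R"
      have cF: "card F = k" unfolding F_def using injphi by (simp add: card_image)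
      have finF: "finite F" unfolding F_def by simp
      have "card V = card (R \<union> F)" using VRF by simp
      also have "\<dots> = card R + card F" using finR finF R_def by (intro card_Un_disjoint) auto
      finally have cV: "card V = N + k" using cF N_def by simp
      have s1: "{v \<in> V. f v = c} \<subseteq> {v \<in> R. g v = c} \<union> {v \<in> F. f v = c}" using VRF f1 by auto
      have c1: "card {v \<in> F. f v = c} \<le> 1"
      proof -
        have fin: "finite {v \<in> F. f v = c}" unfolding F_def by auto
        have "\<forall>x\<in>{v \<in> F. f v = c}. \<forall>y\<in>{v \<in> F. f v = c}. x = y"
          unfolding F_def using Fdist by fastforce
        thus ?thesis using card_le_Suc0_iff_eq[OF fin] by simp
      qed
      have c2: "card {v \<in> R. g v = c} \<le> (N + k - 1) div k"
      proof -
        have "inj_on (\<lambda>v. rk v div k) {v \<in> R. g v = c}"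
        proof (rule inj_onI)
          fix x y assume x: "x \<in> {v \<in> R. g v = c}" and y: "y \<in> {v \<in> R. g v = c}"
            and e: "rk x div k = rk y div k"
          have a1: "rk x < rk y + k" using divA[OF e kpos] .
          have a2: "rk y < rk x + k" using divA[OF e[symmetric] kpos] .
          show "x = y" using g2 x y a1 a2 by auto
        qed
        moreover have "(\<lambda>v. rk v div k) ` {v \<in> R. g v = c} \<subseteq> {..<(N + k - 1) div k}"
        proof
          fix z assume "z \<in> (\<lambda>v. rk v div k) ` {v \<in> R. g v = c}"
          then obtain v where v: "v \<in> R" "z = rk v div k" by auto
          have "rk v < N" using rk_lt v N_def by simp
          hence "rk v div k < (N + k - 1) div k" using divB kpos by blast
          thus "z \<in> {..<(N + k - 1) div k}" using v by simp
        qed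
        ultimately show ?thesis by (metis card_inj_on_le card_lessThan finite_lessThan)
      qed
      have "card {v \<in> V. f v = c} \<le> card ({v \<in> R. g v = c} \<union> {v \<in> F. f v = c})"
        using s1 finR by (intro card_mono) (auto simp: F_def)
      also have "\<dots> \<le> card {v \<in> R. g v = c} + card {v \<in> F. f v = c}" by (rule card_Un_le)
      also have "\<dots> \<le> (N + k - 1) div k + 1" using c1 c2 by simp
      finally have cc: "card {v \<in> V. f v = c} \<le> (N + k - 1) div k + 1" .
      have "((N + k - 1) div k + 1) * k < card V + k"
      proof -
        have d: "(N + k - 1) div k * k \<le> N + k - 1" by (rule div_times_less_eq_dividend)
        have e: "((N + k - 1) div k + 1) * k = (N + k - 1) div k * k + k" by (simp add: distrib_right)
        show ?thesis using d e cV kpos by linarith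
      qed
      hence "real ((N + k - 1) div k + 1) \<le> of_int \<lceil>real (card V) / real k\<rceil>"
        using ceil_ge kpos by blast
      moreover have "real (card {v \<in> V. f v = c}) \<le> real ((N + k - 1) div k + 1)"
        using cc by linarith
      ultimately show "real (card {v \<in> V. f v = c}) \<le> of_int \<lceil>real (card V) / real k\<rceil>" by linarith
    qed
  qed
qed



definition nb :: "nat list \<Rightarrow> theta_vertex \<Rightarrow> theta_vertex set" where
  "nb l x = (case x of TU \<Rightarrow> {theta_pos l i 1 | i. i < length l}
     | TW \<Rightarrow> {theta_pos l i (l!i - 1) | i. i < length l}
     | TV p q \<Rightarrow> {theta_pos l p (q - 1), theta_pos l p (Suc q)})"

lemma TV_in_verts: "TV i j \<in> theta_verts l \<longleftrightarrow> i < length l \<and> 1 \<le> j \<and> j < l!i"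
  unfolding theta_verts_def by auto

lemma TU_in[simp]: "TU \<in> theta_verts l" and TW_in[simp]: "TW \<in> theta_verts l"
  unfolding theta_verts_def by auto

lemma tp0[simp]: "theta_pos l i 0 = TU" unfolding theta_pos_def by simp
lemma tpl: "0 < l!i \<Longrightarrow> theta_pos l i (l!i) = TW" unfolding theta_pos_def by simp
lemma tpm: "0 < j \<Longrightarrow> j < l!i \<Longrightarrow> theta_pos l i j = TV i j" unfolding theta_pos_def by simp

lemma adj_nb:
  assumes "x \<in> theta_verts l" "theta_adj l x y"
  shows "y \<in> nb l x"
proof (cases x)
  case TU
  then show ?thesis using assms(2) unfolding theta_adj_def nb_def theta_pos_def
    by (auto split: if_splits)
next
  case TW
  from assms(2) obtain i j where ij: "i < length l" "j < l!i"
    "(x = theta_pos l i j \<and> y = theta_pos l i (Suc j)) \<or> (y = theta_pos l i j \<and> x = theta_pos l i (Suc j))"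
    unfolding theta_adj_def by blast
  have "Suc j = l!i" "y = theta_pos l i j" using ij TW unfolding theta_pos_def by (auto split: if_splits)
  hence "y = theta_pos l i (l!i - 1)" by (metis diff_Suc_1)
  thus ?thesis using TW ij(1) unfolding nb_def by auto
next
  case (TV p q)
  then show ?thesis using assms unfolding theta_adj_def nb_def theta_pos_def
    by (auto split: if_splits)
qed

lemma gs_step:
  assumes "graph_square (theta_verts l) (theta_adj l) x y"
  shows "x \<noteq> y \<and> x \<in> theta_verts l \<and> y \<in> theta_verts l \<and>
     (y \<in> nb l x \<or> (\<exists>z\<in>theta_verts l. z \<in> nb l x \<and> y \<in> nb l z))"
  using assms adj_nb unfolding graph_square_def by blast



locale th =
  fixes l :: "nat list" and k :: nat
  assumes m3: "length l \<ge> 3" and srt: "sorted l" and l0: "l!0 \<ge> 2" and l1: "l!1 \<ge> 4"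
    and k1: "length l + 3 \<le> k" and k2: "k \<le> 2 * length l + 1"
begin

abbreviation "m \<equiv> length l"

lemma lge4: "1 \<le> i \<Longrightarrow> i < m \<Longrightarrow> 4 \<le> l!i"
  using srt l1 by (metis order_trans sorted_nth_mono)

lemma lge2: assumes "i < m" shows "2 \<le> l!i"
proof (cases "i = 0")
  case True thus ?thesis using l0 by simp
next
  case False thus ?thesis using lge4[of i] assms by simp
qed

lemma lnn: "l \<noteq> []" using m3 by auto

lemma Lm: "4 \<le> l!(m-1)" using lge4 m3 by simp

definition "V = theta_verts l"
definition "G = graph_square V (theta_adj l)"

definition phi :: "nat \<Rightarrow> theta_vertex" where
 "phi j = (if j = 0 then TV (m-1) 3 else if j = 1 then TV 0 1 else if j = 2 then TU
   else if j < m+1 then TV (j-2) 1 else if j < k-2 then TV (j-m) 2 else if j = k-2 then TV (m-1) 2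
   else TV (m-1) 1)"

lemma phi_0: "phi 0 = TV (m-1) 3" and phi_1: "phi 1 = TV 0 1" and phi_2: "phi 2 = TU"
  unfolding phi_def by auto
lemma phi_a: "3 \<le> j \<Longrightarrow> j < m+1 \<Longrightarrow> phi j = TV (j-2) 1" unfolding phi_def by auto
lemma phi_b: "m+1 \<le> j \<Longrightarrow> j < k-2 \<Longrightarrow> phi j = TV (j-m) 2" unfolding phi_def using m3 by auto
lemma phi_c: "phi (k-2) = TV (m-1) 2" unfolding phi_def using m3 k1 by auto
lemma phi_d: "phi (k-1) = TV (m-1) 1" unfolding phi_def using m3 k1 by auto

definition "Fs = {TU} \<union> (\<lambda>i. TV i 1) ` {..<m} \<union> (\<lambda>i. TV i 2) ` {1..<k-m-2} \<union> {TV (m-1) 2, TV (m-1) 3}"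

lemma inF: "TU \<in> Fs" "i < m \<Longrightarrow> TV i 1 \<in> Fs" "1 \<le> i \<Longrightarrow> i < k-m-2 \<Longrightarrow> TV i 2 \<in> Fs"
  "TV (m-1) 2 \<in> Fs" "TV (m-1) 3 \<in> Fs"
  unfolding Fs_def by auto

lemma phi_img: "phi ` {0..<k} = Fs"
proof
  show "phi ` {0..<k} \<subseteq> Fs"
  proof
    fix x assume "x \<in> phi ` {0..<k}"
    then obtain j where j: "j < k" "x = phi j" by auto
    consider "j = 0" | "j = 1" | "j = 2" | "3 \<le> j" "j < m+1" | "m+1 \<le> j" "j < k-2" | "j = k-2" | "j = k-1"
      using j(1) by linarith
    thus "x \<in> Fs"
    proof cases
      case 1 thus ?thesis using j inF phi_0 by simp
    next
      case 2 thus ?thesis using j inF(2)[of 0] lnn phi_1 by simp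
    next
      case 3 thus ?thesis using j inF phi_2 by simp
    next
      case 4 thus ?thesis using j inF(2)[of "j-2"] phi_a by simp
    next
      case 5 thus ?thesis using j inF(3)[of "j-m"] k1 phi_b by simp
    next
      case 6 thus ?thesis using j inF phi_c by simp
    next
      case 7 thus ?thesis using j inF(2)[of "m-1"] m3 phi_d by simp
    qed
  qed
next
  show "Fs \<subseteq> phi ` {0..<k}"
  proof
    fix x assume x: "x \<in> Fs"
    have a: "TU = phi 2" "TV 0 1 = phi 1" "TV (m-1) 3 = phi 0" "TV (m-1) 2 = phi (k-2)"
      "TV (m-1) 1 = phi (k-1)"
      using m3 k1 unfolding phi_def by auto
    have b: "TV i 1 = phi (i+2)" if "1 \<le> i" "i < m - 1" for i using that m3 k1 unfolding phi_def by auto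
    have c: "TV i 2 = phi (i+m)" if "1 \<le> i" "i < k-m-2" for i using that m3 k1 unfolding phi_def by auto
    have r: "2 < k" "1 < k" "0 < k" "k - 2 < k" "k - 1 < k" using k1 by auto
    show "x \<in> phi ` {0..<k}"
    proof -
      consider "x = TU" | i where "i < m" "x = TV i 1" | i where "1 \<le> i" "i < k-m-2" "x = TV i 2"
        | "x = TV (m-1) 2" | "x = TV (m-1) 3" using x unfolding Fs_def by auto
      thus ?thesis
      proof cases
        case 1 thus ?thesis using a r by (metis atLeastLessThan_iff imageI le0)
      next
        case (2 i)
        consider "i = 0" | "1 \<le> i" "i < m - 1" | "i = m - 1" using 2 by linarith
        thus ?thesis
        proof cases
          case 1 thus ?thesis using a r 2 by (metis atLeastLessThan_iff imageI le0)
        next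
          case 3 thus ?thesis using a r 2 by (metis atLeastLessThan_iff imageI le0)
        next
          case 4: 2
          have "i + 2 < k" using 4 k1 by linarith
          thus ?thesis using b[OF 4] 2 by (metis atLeastLessThan_iff imageI le0)
        qed
      next
        case (3 i)
        have "i + m < k" using 3 k1 by linarith
        thus ?thesis using c[OF 3(1,2)] 3 by (metis atLeastLessThan_iff imageI le0)
      next
        case 4 thus ?thesis using a r by (metis atLeastLessThan_iff imageI le0)
      next
        case 5 thus ?thesis using a r by (metis atLeastLessThan_iff imageI le0)
      qed
    qed
  qed
qed

lemma phi_inj: "inj_on phi {0..<k}"
  unfolding inj_on_def phi_def using m3 k1 k2 by (auto split: if_splits)

lemma Fs_V: "Fs \<subseteq> V"
proof
  fix x assume x: "x \<in> Fs"
  have "4 \<le> l!(m - 1)" by (rule Lm)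
  moreover have "i < m \<Longrightarrow> 2 \<le> l!i" for i by (rule lge2)
  moreover have "1 \<le> i \<Longrightarrow> i < k-m-2 \<Longrightarrow> 4 \<le> l!i" for i using lge4[of i] k2 by simp
  ultimately show "x \<in> V" using x m3 k2 unfolding Fs_def V_def by (force simp: TV_in_verts)
qed


lemma card2: "card {a, b} \<le> 2" by (cases "a = b") auto

lemma step:
  assumes "y \<in> V - Fs" "G x y"
  shows "x \<noteq> y" "x \<in> V" "y \<in> nb l x \<or> (\<exists>z\<in>V. z \<in> nb l x \<and> y \<in> nb l z)"
  using gs_step[of l x y] assms unfolding G_def V_def by auto

lemma tpi1: "i < m \<Longrightarrow> theta_pos l i 1 = TV i 1" using lge2[of i] by (intro tpm) auto

lemma nbU: "z \<in> nb l TU \<Longrightarrow> \<exists>i<m. z = TV i 1" unfolding nb_def using tpi1 by auto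
lemma nbU_F: "z \<in> nb l TU \<Longrightarrow> z \<in> Fs" using nbU inF(2) by blast
lemma nbW: "z \<in> nb l TW \<Longrightarrow> \<exists>i<m. z = theta_pos l i (l!i - 1)" unfolding nb_def by auto
lemma nbTV: "nb l (TV p q) = {theta_pos l p (q - 1), theta_pos l p (q + 1)}" unfolding nb_def by simp

lemma K0: "card {y \<in> V - Fs. G (TV (m-1) 3) y} \<le> m + 2"
proof -
  let ?S = "{theta_pos l (m-1) 4, theta_pos l (m-1) 5} \<union> (\<lambda>i. theta_pos l i (l!i - 1)) ` {..<m}"
  have L: "4 \<le> l!(m-1)" by (rule Lm)
  have sub: "{y \<in> V - Fs. G (TV (m-1) 3) y} \<subseteq> ?S"
  proof
    fix y assume y: "y \<in> {y \<in> V - Fs. G (TV (m-1) 3) y}"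
    hence yF: "y \<notin> Fs" and yy: "y \<in> V - Fs" "G (TV (m-1) 3) y" by auto
    have n1: "nb l (TV (m-1) 3) = {TV (m-1) 2, theta_pos l (m-1) 4}" using L by (simp add: nbTV tpm)
    have n2: "nb l (TV (m-1) 2) = {TV (m-1) 1, TV (m-1) 3}" using L by (simp add: nbTV tpm)
    from step(3)[OF yy] consider (d) "y \<in> nb l (TV (m-1) 3)"
      | (t) z where "z \<in> V" "z \<in> nb l (TV (m-1) 3)" "y \<in> nb l z" by blast
    thus "y \<in> ?S"
    proof cases
      case d thus ?thesis using n1 yF inF by auto
    next
      case t
      from t(2) n1 consider "z = TV (m-1) 2" | "z = theta_pos l (m-1) 4" by auto
      thus ?thesis
      proof cases
        case 1 thus ?thesis using t n2 yF inF(2)[of "m-1"] inF(5) m3 by auto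
      next
        case 2
        show ?thesis
        proof (cases "l!(m-1) = 4")
          case True
          hence "z = TW" using 2 by (simp add: theta_pos_def)
          hence "y \<in> nb l TW" using t by simp
          thus ?thesis using nbW by blast
        next
          case False
          hence "z = TV (m-1) 4" using 2 L by (simp add: tpm)
          hence "y \<in> {theta_pos l (m-1) 3, theta_pos l (m-1) 5}" using t by (simp add: nbTV)
          moreover have "theta_pos l (m-1) 3 = TV (m-1) 3" using L by (simp add: tpm)
          ultimately show ?thesis using yF inF by auto
        qed
      qed
    qed
  qed
  have cS: "card ?S \<le> m + 2"
  proof -
    have "card ?S \<le> card {theta_pos l (m-1) 4, theta_pos l (m-1) 5} + card ((\<lambda>i. theta_pos l i (l!i - 1)) ` {..<m})"
      by (rule card_Un_le)
    moreover have "card ((\<lambda>i. theta_pos l i (l!i - 1)) ` {..<m}) \<le> m"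
      using card_image_le[of "{..<m}"] by fastforce
    ultimately show ?thesis using card2[of "theta_pos l (m-1) 4" "theta_pos l (m-1) 5"] by linarith
  qed
  have fS: "finite ?S" by simp
  show ?thesis using card_mono[OF fS sub] cS by linarith
qed

lemma K1: "card {y \<in> V - Fs. G (TV 0 1) y} \<le> m + 1"
proof -
  let ?S = "{theta_pos l 0 2, theta_pos l 0 3} \<union> (\<lambda>i. theta_pos l i (l!i - 1)) ` {1..<m}"
  have sub: "{y \<in> V - Fs. G (TV 0 1) y} \<subseteq> ?S"
  proof
    fix y assume y: "y \<in> {y \<in> V - Fs. G (TV 0 1) y}"
    hence yF: "y \<notin> Fs" and yy: "y \<in> V - Fs" "G (TV 0 1) y" by auto
    have xy: "TV 0 1 \<noteq> y" using step(1)[OF yy] .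
    have n1: "nb l (TV 0 1) = {TU, theta_pos l 0 2}" by (simp add: nbTV numeral_2_eq_2)
    from step(3)[OF yy] consider (d) "y \<in> nb l (TV 0 1)"
      | (t) z where "z \<in> V" "z \<in> nb l (TV 0 1)" "y \<in> nb l z" by blast
    thus "y \<in> ?S"
    proof cases
      case d thus ?thesis using n1 yF inF by auto
    next
      case t
      from t(2) n1 consider "z = TU" | "z = theta_pos l 0 2" by auto
      thus ?thesis
      proof cases
        case 1 thus ?thesis using t nbU_F yF by auto
      next
        case 2
        show ?thesis
        proof (cases "l!0 = 2")
          case True
          hence "z = TW" using 2 by (simp add: theta_pos_def)
          hence "y \<in> nb l TW" using t by simp
          then obtain i where i: "i < m" "y = theta_pos l i (l!i - 1)" using nbW by blast
          have "i \<noteq> 0"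
          proof
            assume "i = 0"
            hence "y = TV 0 1" using i True by (simp add: theta_pos_def)
            thus False using xy by simp
          qed
          thus ?thesis using i by auto
        next
          case False
          hence z2: "z = TV 0 2" using 2 l0 by (simp add: tpm)
          have "y \<in> nb l (TV 0 2)" using t(3) z2 by simp
          moreover have "nb l (TV 0 2) = {theta_pos l 0 1, theta_pos l 0 3}" by (simp add: nbTV)
          ultimately have "y \<in> {theta_pos l 0 1, theta_pos l 0 3}" by simp
          moreover have "theta_pos l 0 1 = TV 0 1" using tpi1[of 0] lnn by simp
          moreover have "TV 0 1 \<in> Fs" using inF(2)[of 0] lnn by simp
          ultimately have "y = theta_pos l 0 3" using yF by auto
          thus ?thesis by simp
        qed
      qed
    qed
  qed
  have cS: "card ?S \<le> m + 1"
  proof -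
    have "card ?S \<le> card {theta_pos l 0 2, theta_pos l 0 3} + card ((\<lambda>i. theta_pos l i (l!i - 1)) ` {1..<m})"
      by (rule card_Un_le)
    moreover have "card ((\<lambda>i. theta_pos l i (l!i - 1)) ` {1..<m}) \<le> m - 1"
      using card_image_le[of "{1..<m}"] by fastforce
    ultimately show ?thesis using card2[of "theta_pos l 0 2" "theta_pos l 0 3"] m3 by linarith
  qed
  have fS: "finite ?S" by simp
  show ?thesis using card_mono[OF fS sub] cS by linarith
qed

lemma K2: "card {y \<in> V - Fs. G TU y} \<le> 2*m + 2 - k"
proof -
  let ?S = "(\<lambda>i. theta_pos l i 2) ` ({0} \<union> {k-m-2..<m-1})"
  have sub: "{y \<in> V - Fs. G TU y} \<subseteq> ?S"
  proof
    fix y assume y: "y \<in> {y \<in> V - Fs. G TU y}"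
    hence yF: "y \<notin> Fs" and yy: "y \<in> V - Fs" "G TU y" by auto
    from step(3)[OF yy] consider (d) "y \<in> nb l TU"
      | (t) z where "z \<in> V" "z \<in> nb l TU" "y \<in> nb l z" by blast
    thus "y \<in> ?S"
    proof cases
      case d thus ?thesis using nbU_F yF by auto
    next
      case t
      then obtain i where i: "i < m" "z = TV i 1" using nbU by blast
      hence "y \<in> {TU, theta_pos l i 2}" using t by (simp add: nbTV numeral_2_eq_2)
      hence yi: "y = theta_pos l i 2" using yF inF(1) by auto
      have "i \<in> {0} \<union> {k-m-2..<m-1}"
      proof (rule ccontr)
        assume "i \<notin> {0} \<union> {k-m-2..<m-1}"
        hence "(1 \<le> i \<and> i < k-m-2) \<or> i = m - 1" using i by auto
        thus False
        proof
          assume a: "1 \<le> i \<and> i < k-m-2"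
          hence "y = TV i 2" using yi lge4[of i] i by (simp add: tpm)
          thus False using inF(3)[of i] a yF by simp
        next
          assume a: "i = m - 1"
          hence "y = TV (m-1) 2" using yi Lm by (simp add: tpm)
          thus False using inF(4) yF by simp
        qed
      qed
      thus ?thesis using yi by blast
    qed
  qed
  have cS: "card ?S \<le> 2*m + 2 - k"
  proof -
    have "card ?S \<le> card ({0} \<union> {k-m-2..<m-1})" by (rule card_image_le) simp
    also have "\<dots> \<le> card {0::nat} + card {k-m-2..<m-1}" by (rule card_Un_le)
    also have "\<dots> = 1 + (m - 1 - (k - m - 2))" by simp
    also have "\<dots> = 2*m + 2 - k" using k1 k2 by simp
    finally show ?thesis .
  qed
  have fS: "finite ?S" by simp
  show ?thesis using card_mono[OF fS sub] cS by linarith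
qed

lemma K3: assumes "1 \<le> i" "i < m - 1" shows "card {y \<in> V - Fs. G (TV i 1) y} \<le> 2"
proof -
  let ?S = "{TV i 2, theta_pos l i 3}"
  have L: "4 \<le> l!i" using lge4 assms by simp
  have sub: "{y \<in> V - Fs. G (TV i 1) y} \<subseteq> ?S"
  proof
    fix y assume y: "y \<in> {y \<in> V - Fs. G (TV i 1) y}"
    hence yF: "y \<notin> Fs" and yy: "y \<in> V - Fs" "G (TV i 1) y" by auto
    have n1: "nb l (TV i 1) = {TU, TV i 2}" using L by (simp add: nbTV tpm numeral_2_eq_2)
    have n2: "nb l (TV i 2) = {TV i 1, theta_pos l i 3}" using L by (simp add: nbTV tpm)
    from step(3)[OF yy] consider (d) "y \<in> nb l (TV i 1)"
      | (t) z where "z \<in> V" "z \<in> nb l (TV i 1)" "y \<in> nb l z" by blast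
    thus "y \<in> ?S"
    proof cases
      case d thus ?thesis using n1 yF inF by auto
    next
      case t
      from t(2) n1 consider "z = TU" | "z = TV i 2" by auto
      thus ?thesis
      proof cases
        case 1 thus ?thesis using t nbU_F yF by auto
      next
        case 2 thus ?thesis using t n2 yF inF(2)[of i] assms by auto
      qed
    qed
  qed
  have fS: "finite ?S" by simp
  show ?thesis using card_mono[OF fS sub] card2[of "TV i 2" "theta_pos l i 3"] by linarith
qed

lemma K4: assumes "1 \<le> i" "i < k - m - 2" shows "card {y \<in> V - Fs. G (TV i 2) y} \<le> 2"
proof -
  let ?S = "{TV i 3, theta_pos l i 4}"
  have im: "i < m" using assms k2 by simp
  have L: "4 \<le> l!i" using lge4 assms im by simp
  have sub: "{y \<in> V - Fs. G (TV i 2) y} \<subseteq> ?S"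
  proof
    fix y assume y: "y \<in> {y \<in> V - Fs. G (TV i 2) y}"
    hence yF: "y \<notin> Fs" and yy: "y \<in> V - Fs" "G (TV i 2) y" by auto
    have n1: "nb l (TV i 2) = {TV i 1, TV i 3}" using L by (simp add: nbTV tpm)
    have n2: "nb l (TV i 1) = {TU, TV i 2}" using L by (simp add: nbTV tpm numeral_2_eq_2)
    have n3: "nb l (TV i 3) = {TV i 2, theta_pos l i 4}" using L by (simp add: nbTV tpm)
    from step(3)[OF yy] consider (d) "y \<in> nb l (TV i 2)"
      | (t) z where "z \<in> V" "z \<in> nb l (TV i 2)" "y \<in> nb l z" by blast
    thus "y \<in> ?S"
    proof cases
      case d thus ?thesis using n1 yF inF(2)[of i] im by auto
    next
      case t
      from t(2) n1 consider "z = TV i 1" | "z = TV i 3" by auto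
      thus ?thesis
      proof cases
        case 1 thus ?thesis using t n2 yF inF(1) inF(3)[of i] assms by auto
      next
        case 2 thus ?thesis using t n3 yF inF(3)[of i] assms by auto
      qed
    qed
  qed
  have fS: "finite ?S" by simp
  show ?thesis using card_mono[OF fS sub] card2[of "TV i 3" "theta_pos l i 4"] by linarith
qed

lemma K5: "card {y \<in> V - Fs. G (TV (m-1) 2) y} \<le> 1"
proof -
  let ?S = "{theta_pos l (m-1) 4}"
  have L: "4 \<le> l!(m-1)" by (rule Lm)
  have sub: "{y \<in> V - Fs. G (TV (m-1) 2) y} \<subseteq> ?S"
  proof
    fix y assume y: "y \<in> {y \<in> V - Fs. G (TV (m-1) 2) y}"
    hence yF: "y \<notin> Fs" and yy: "y \<in> V - Fs" "G (TV (m-1) 2) y" by auto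
    have n1: "nb l (TV (m-1) 2) = {TV (m-1) 1, TV (m-1) 3}" using L by (simp add: nbTV tpm)
    have n2: "nb l (TV (m-1) 1) = {TU, TV (m-1) 2}" using L by (simp add: nbTV tpm numeral_2_eq_2)
    have n3: "nb l (TV (m-1) 3) = {TV (m-1) 2, theta_pos l (m-1) 4}" using L by (simp add: nbTV tpm)
    have f: "TV (m-1) 1 \<in> Fs" using inF(2)[of "m-1"] m3 by simp
    from step(3)[OF yy] consider (d) "y \<in> nb l (TV (m-1) 2)"
      | (t) z where "z \<in> V" "z \<in> nb l (TV (m-1) 2)" "y \<in> nb l z" by blast
    thus "y \<in> ?S"
    proof cases
      case d thus ?thesis using n1 yF f inF by auto
    next
      case t
      from t(2) n1 consider "z = TV (m-1) 1" | "z = TV (m-1) 3" by auto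
      thus ?thesis
      proof cases
        case 1 thus ?thesis using t n2 yF inF by auto
      next
        case 2 thus ?thesis using t n3 yF inF by auto
      qed
    qed
  qed
  have fS: "finite ?S" by simp
  show ?thesis using card_mono[OF fS sub] by simp
qed

lemma K6: "card {y \<in> V - Fs. G (TV (m-1) 1) y} = 0"
proof -
  have L: "4 \<le> l!(m-1)" by (rule Lm)
  have sub: "{y \<in> V - Fs. G (TV (m-1) 1) y} = {}"
  proof (rule ccontr)
    assume "{y \<in> V - Fs. G (TV (m-1) 1) y} \<noteq> {}"
    then obtain y where yF: "y \<notin> Fs" and yy: "y \<in> V - Fs" "G (TV (m-1) 1) y" by auto
    have n1: "nb l (TV (m-1) 1) = {TU, TV (m-1) 2}" using L by (simp add: nbTV tpm numeral_2_eq_2)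
    have n2: "nb l (TV (m-1) 2) = {TV (m-1) 1, TV (m-1) 3}" using L by (simp add: nbTV tpm)
    have f: "TV (m-1) 1 \<in> Fs" using inF(2)[of "m-1"] m3 by simp
    from step(3)[OF yy] consider (d) "y \<in> nb l (TV (m-1) 1)"
      | (t) z where "z \<in> V" "z \<in> nb l (TV (m-1) 1)" "y \<in> nb l z" by blast
    thus False
    proof cases
      case d thus ?thesis using n1 yF inF by auto
    next
      case t
      from t(2) n1 consider "z = TU" | "z = TV (m-1) 2" by auto
      thus ?thesis
      proof cases
        case 1 thus ?thesis using t nbU_F yF by auto
      next
        case 2 thus ?thesis using t n2 yF f inF by auto
      qed
    qed
  qed
  thus ?thesis by (metis card.empty)
qed

lemma Kall: assumes "j < k" shows "card {y \<in> V - Fs. G (phi j) y} + j < k"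
proof -
  consider "j = 0" | "j = 1" | "j = 2" | "3 \<le> j" "j < m+1" | "m+1 \<le> j" "j < k-2" | "j = k-2" | "j = k-1"
    using assms by linarith
  thus ?thesis
  proof cases
    case 1 thus ?thesis using K0 phi_0 k1 by simp
  next
    case 2 thus ?thesis using K1 phi_1 k1 by simp
  next
    case 3 thus ?thesis using K2 phi_2 k1 by simp
  next
    case 4
    have "card {y \<in> V - Fs. G (TV (j-2) 1) y} \<le> 2" using 4 by (intro K3) auto
    thus ?thesis using 4 phi_a k1 by simp
  next
    case 5
    have "card {y \<in> V - Fs. G (TV (j-m) 2) y} \<le> 2" using 5 by (intro K4) auto
    thus ?thesis using 5 phi_b k1 by simp
  next
    case 6 thus ?thesis using K5 phi_c k1 by simp
  next
    case 7 thus ?thesis using K6 phi_d k1 by simp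
  qed
qed
end


lemma nat_divmod_eq:
  fixes a b c x y :: nat
  assumes "a < c" "b < c" "a + x * c = b + y * c"
  shows "a = b \<and> x = y"
proof -
  have "(a + x * c) mod c = a" using assms(1) by simp
  moreover have "(b + y * c) mod c = b" using assms(2) by simp
  ultimately have ab: "a = b" using assms(3) by simp
  have e1: "(a + x * c) div c = x" using assms(1) by simp
  have e2: "(b + y * c) div c = y" using assms(2) by simp
  have "x = (a + x * c) div c" using e1 by simp
  also have "\<dots> = (b + y * c) div c" using assms(3) by simp
  also have "\<dots> = y" using e2 .
  finally show ?thesis using ab by simp
qed

context th begin

definition "W = (m + 1) div 2"
definition "W' = m - W"

lemma Wb: "1 \<le> W'" "W' \<le> W" "2 * W \<le> m + 1" "W + W' = m" "1 \<le> W"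
  unfolding W_def W'_def using m3 by presburger+

definition P :: "nat \<Rightarrow> nat \<Rightarrow> int" where
  "P i h = (if i < W then int i - int h * int W else 1 + (int h - 1) * int W' + int i - int W)"

definition posv :: "theta_vertex \<Rightarrow> int" where
  "posv x = (case x of TU \<Rightarrow> 0 | TW \<Rightarrow> 0 | TV i j \<Rightarrow> P i (l!i - j))"

lemma PD1: "P i (h+1) - P i h = (if i < W then - int W else int W')"
  unfolding P_def by (simp add: algebra_simps)
lemma PD2: "P i (h+2) - P i h = (if i < W then - 2 * int W else 2 * int W')"
  unfolding P_def by (simp add: algebra_simps)
lemma P1: "P i 1 = (if i < W then int i - int W else 1 + int i - int W)"
  unfolding P_def by simp
lemma P2: "P i 2 = (if i < W then int i - 2 * int W else 1 + int W' + int i - int W)"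
  unfolding P_def by simp

lemma close1: "\<bar>P i (h+1) - P i h\<bar> \<le> int m + 1" using PD1[of i h] Wb by auto
lemma close2: "\<bar>P i (h+2) - P i h\<bar> \<le> int m + 1" using PD2[of i h] Wb by auto
lemma closeP1: "i < m \<Longrightarrow> \<bar>P i 1\<bar> \<le> int m + 1" using P1[of i] Wb by auto
lemma closeP2: "i < m \<Longrightarrow> \<bar>P i 2\<bar> \<le> int m + 1" using P2[of i] Wb by auto
lemma closeP11: "i < m \<Longrightarrow> i' < m \<Longrightarrow> \<bar>P i 1 - P i' 1\<bar> \<le> int m + 1"
  using P1[of i] P1[of i'] Wb by auto

lemma P_neg: "i < W \<Longrightarrow> 1 \<le> h \<Longrightarrow> P i h < 0"
proof -
  assume a: "i < W" "1 \<le> h"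
  have "int W \<le> int h * int W" using a(2) by (simp add: mult_le_cancel_right1)
  moreover have "P i h = int i - int h * int W" using a unfolding P_def by simp
  ultimately show ?thesis using a by linarith
qed

lemma P_pos: "\<not> i < W \<Longrightarrow> 1 \<le> h \<Longrightarrow> P i h > 0"
proof -
  assume a: "\<not> i < W" "1 \<le> h"
  have "0 \<le> (int h - 1) * int W'" using a(2) by simp
  moreover have "P i h = 1 + (int h - 1) * int W' + int i - int W" using a unfolding P_def by simp
  ultimately show ?thesis using a by linarith
qed

lemma P_inj:
  assumes "i < m" "i' < m" "1 \<le> h" "1 \<le> h'" "P i h = P i' h'"
  shows "i = i' \<and> h = h'"
proof (cases "i < W")
  case True
  hence i'W: "i' < W" using P_pos[of i' h'] P_neg[of i h] assms by force
  have "int i - int h * int W = int i' - int h' * int W" using assms(5) True i'W unfolding P_def by simp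
  hence "int (i + h' * W) = int (i' + h * W)" by simp
  hence "i + h' * W = i' + h * W" by (simp only: of_nat_eq_iff)
  thus ?thesis using nat_divmod_eq[of i W i' h' h] True i'W by auto
next
  case False
  hence i'W: "\<not> i' < W" using P_pos[of i h] P_neg[of i' h'] assms by force
  obtain a b where ab: "h = a + 1" "h' = b + 1" using assms(3,4) by (metis Suc_eq_plus1 Suc_le_D One_nat_def)
  have "1 + int a * int W' + int i - int W = 1 + int b * int W' + int i' - int W"
    using assms(5) False i'W ab unfolding P_def by simp
  hence "int ((i - W) + a * W') = int ((i' - W) + b * W')" using False i'W by simp
  hence "(i - W) + a * W' = (i' - W) + b * W'" by (simp only: of_nat_eq_iff)
  moreover have "i - W < W'" "i' - W < W'" using assms(1,2) Wb unfolding W'_def by auto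
  ultimately have "i - W = i' - W \<and> a = b" using nat_divmod_eq by blast
  thus ?thesis using False i'W ab by auto
qed

lemma posTV: "posv (TV i j) = P i (l!i - j)" unfolding posv_def by simp

lemma posv_inj: "inj_on posv (V - Fs)"
proof (rule inj_onI)
  fix x y assume x: "x \<in> V - Fs" and y: "y \<in> V - Fs" and e: "posv x = posv y"
  have TV_nz: "posv (TV i j) \<noteq> 0" if "TV i j \<in> V" for i j
  proof -
    have "i < m" "1 \<le> l!i - j" using that unfolding V_def by (auto simp: TV_in_verts)
    thus ?thesis using P_neg P_pos posTV by (metis less_irrefl)
  qed
  show "x = y"
  proof (cases x)
    case TU thus ?thesis using x inF(1) by simp
  next
    case TW
    show ?thesis
    proof (cases y)
      case TU thus ?thesis using y inF(1) by simp
    next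
      case TW thus ?thesis using \<open>x = TW\<close> by simp
    next
      case (TV i j) thus ?thesis using TW e TV_nz y unfolding posv_def by auto
    qed
  next
    case (TV i j)
    note xTV = TV
    show ?thesis
    proof (cases y)
      case TU thus ?thesis using y inF(1) by simp
    next
      case TW thus ?thesis using xTV e TV_nz x unfolding posv_def by auto
    next
      case (TV i' j')
      have a: "i < m" "1 \<le> j" "j < l!i" using x xTV unfolding V_def by (auto simp: TV_in_verts)
      have b: "i' < m" "1 \<le> j'" "j' < l!i'" using y TV unfolding V_def by (auto simp: TV_in_verts)
      have "P i (l!i - j) = P i' (l!i' - j')" using e xTV TV posTV by simp
      moreover have "1 \<le> l!i - j" "1 \<le> l!i' - j'" using a b by auto
      ultimately have "i = i' \<and> l!i - j = l!i' - j'" using P_inj[OF a(1) b(1)] by blast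
      thus ?thesis using a b xTV TV by auto
    qed
  qed
qed


lemma C1: assumes "j + 1 < l!i" shows "\<bar>posv (TV i j) - posv (TV i (j+1))\<bar> \<le> int m + 1"
proof -
  obtain h where h: "l!i - (j+1) = h" by simp
  hence "l!i - j = h + 1" using assms by simp
  hence "posv (TV i j) = P i (h+1)" by (simp add: posTV)
  moreover have "posv (TV i (j+1)) = P i h" using h by (simp add: posTV)
  ultimately show ?thesis using close1[of i h] by simp
qed

lemma C2: assumes "j + 2 < l!i" shows "\<bar>posv (TV i j) - posv (TV i (j+2))\<bar> \<le> int m + 1"
proof -
  obtain h where h: "l!i - (j+2) = h" by simp
  hence "l!i - j = h + 2" using assms by simp
  hence "posv (TV i j) = P i (h+2)" by (simp add: posTV)
  moreover have "posv (TV i (j+2)) = P i h" using h by (simp add: posTV)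
  ultimately show ?thesis using close2[of i h] by simp
qed

lemma C1w: assumes "i < m" "j + 1 = l!i" shows "\<bar>posv (TV i j) - posv TW\<bar> \<le> int m + 1"
proof -
  have "l!i - j = 1" using assms by simp
  hence "posv (TV i j) = P i 1" by (simp add: posTV)
  moreover have "posv TW = 0" unfolding posv_def by simp
  ultimately show ?thesis using closeP1[OF assms(1)] by simp
qed

lemma C2w: assumes "i < m" "j + 2 = l!i" shows "\<bar>posv (TV i j) - posv TW\<bar> \<le> int m + 1"
proof -
  have "l!i - j = 2" using assms by simp
  hence "posv (TV i j) = P i 2" by (simp add: posTV)
  moreover have "posv TW = 0" unfolding posv_def by simp
  ultimately show ?thesis using closeP2[OF assms(1)] by simp
qed

lemma C3: assumes "i < m" "i' < m"
  shows "\<bar>posv (TV i (l!i - 1)) - posv (TV i' (l!i' - 1))\<bar> \<le> int m + 1"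
proof -
  have "l!i - (l!i - 1) = 1" "l!i' - (l!i' - 1) = 1" using lge2[OF assms(1)] lge2[OF assms(2)] by auto
  hence "posv (TV i (l!i - 1)) = P i 1" "posv (TV i' (l!i' - 1)) = P i' 1" by (simp_all add: posTV)
  thus ?thesis using closeP11[OF assms] by simp
qed

lemma Rform: "x \<in> V - Fs \<Longrightarrow> x = TW \<or> (\<exists>p q. x = TV p q \<and> p < m \<and> 2 \<le> q \<and> q < l!p)"
proof -
  assume x: "x \<in> V - Fs"
  show ?thesis
  proof (cases x)
    case TU thus ?thesis using x inF(1) by simp
  next
    case TW thus ?thesis by simp
  next
    case (TV p q)
    have a: "p < m" "1 \<le> q" "q < l!p" using x TV unfolding V_def by (auto simp: TV_in_verts)
    moreover have "q \<noteq> 1" using x TV inF(2)[of p] a(1) by auto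
    ultimately show ?thesis using TV by auto
  qed
qed

lemma band: assumes x: "x \<in> V - Fs" and y: "y \<in> V - Fs" and g: "G x y"
  shows "\<bar>posv x - posv y\<bar> \<le> int m + 1"
proof -
  have xy: "x \<noteq> y" using step(1)[OF y g] .
  have yTU: "y \<noteq> TU" using y inF(1) by auto
  from step(3)[OF y g] have cs: "y \<in> nb l x \<or> (\<exists>z\<in>V. z \<in> nb l x \<and> y \<in> nb l z)" .
  from Rform[OF x] show ?thesis
  proof
    assume xW: "x = TW"
    from cs show ?thesis
    proof
      assume "y \<in> nb l x"
      then obtain i where i: "i < m" "y = theta_pos l i (l!i - 1)" using nbW xW by blast
      have L: "2 \<le> l!i" using lge2 i by simp
      hence "y = TV i (l!i - 1)" using i by (simp add: tpm)
      moreover have "(l!i - 1) + 1 = l!i" using L by simp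
      ultimately show ?thesis using C1w[of i "l!i - 1"] i xW by (simp add: abs_minus_commute)
    next
      assume "\<exists>z\<in>V. z \<in> nb l x \<and> y \<in> nb l z"
      then obtain z where z: "z \<in> nb l TW" "y \<in> nb l z" using xW by blast
      then obtain i where i: "i < m" "z = theta_pos l i (l!i - 1)" using nbW by blast
      have L: "2 \<le> l!i" using lge2 i by simp
      hence zz: "z = TV i (l!i - 1)" using i by (simp add: tpm)
      have "y \<in> {theta_pos l i (l!i - 1 - 1), theta_pos l i (l!i - 1 + 1)}" using z zz by (simp only: nbTV)
      moreover have "theta_pos l i (l!i - 1 + 1) = TW" using L by (simp add: tpl)
      moreover have "l!i - 1 - 1 = l!i - 2" by simp
      ultimately have y2: "y = theta_pos l i (l!i - 2)" using xy xW by auto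
      show ?thesis
      proof (cases "l!i = 2")
        case True hence "y = TU" using y2 by simp
        thus ?thesis using yTU by simp
      next
        case False
        hence "y = TV i (l!i - 2)" using y2 L by (simp add: tpm)
        moreover have "(l!i - 2) + 2 = l!i" using L by simp
        ultimately show ?thesis using C2w[of i "l!i - 2"] i xW by (simp add: abs_minus_commute)
      qed
    qed
  next
    assume "\<exists>p q. x = TV p q \<and> p < m \<and> 2 \<le> q \<and> q < l!p"
    then obtain p q where pq: "x = TV p q" "p < m" "2 \<le> q" "q < l!p" by blast
    have tq1: "theta_pos l p (q - 1) = TV p (q-1)" using pq by (simp add: tpm)
    have nx: "nb l x = {TV p (q-1), theta_pos l p (q+1)}" using pq(1) tq1 by (simp only: nbTV)
    have q1: "q - 1 + 1 = q" using pq by simp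
    from cs show ?thesis
    proof
      assume "y \<in> nb l x"
      hence "y = TV p (q-1) \<or> y = theta_pos l p (q+1)" using nx by simp
      thus ?thesis
      proof
        assume yq: "y = TV p (q-1)"
        have "q - 1 + 1 < l!p" using pq by simp
        hence "\<bar>posv (TV p (q-1)) - posv (TV p (q - 1 + 1))\<bar> \<le> int m + 1" by (rule C1)
        thus ?thesis using yq pq(1) q1 by (simp add: abs_minus_commute)
      next
        assume yq: "y = theta_pos l p (q+1)"
        show ?thesis
        proof (cases "q + 1 = l!p")
          case True
          hence "y = TW" using yq by (simp add: theta_pos_def)
          thus ?thesis using C1w[of p q] pq True by simp
        next
          case False
          hence "q + 1 < l!p" using pq by simp
          hence "y = TV p (q+1)" using yq by (simp add: tpm)
          thus ?thesis using C1[of q p] pq \<open>q + 1 < l!p\<close> by simp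
        qed
      qed
    next
      assume "\<exists>z\<in>V. z \<in> nb l x \<and> y \<in> nb l z"
      then obtain z where z: "z \<in> nb l x" "y \<in> nb l z" by blast
      hence "z = TV p (q-1) \<or> z = theta_pos l p (q+1)" using nx by simp
      thus ?thesis
      proof
        assume zz: "z = TV p (q-1)"
        have "y \<in> {theta_pos l p (q - 1 - 1), theta_pos l p (q - 1 + 1)}" using z zz by (simp only: nbTV)
        moreover have "theta_pos l p (q - 1 + 1) = x" using pq q1 by (simp add: tpm)
        moreover have "q - 1 - 1 = q - 2" by simp
        ultimately have y2: "y = theta_pos l p (q - 2)" using xy by auto
        show ?thesis
        proof (cases "q = 2")
          case True hence "y = TU" using y2 by simp
          thus ?thesis using yTU by simp
        next
          case False
          hence "y = TV p (q-2)" using y2 pq by (simp add: tpm)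
          moreover have "q - 2 + 2 = q" using pq by simp
          moreover have "q - 2 + 2 < l!p" using pq by simp
          ultimately show ?thesis using C2[of "q-2" p] pq by (simp add: abs_minus_commute)
        qed
      next
        assume zq: "z = theta_pos l p (q+1)"
        show ?thesis
        proof (cases "q + 1 = l!p")
          case True
          hence "z = TW" using zq by (simp add: theta_pos_def)
          then obtain i where i: "i < m" "y = theta_pos l i (l!i - 1)" using nbW z by blast
          have "y = TV i (l!i - 1)" using i lge2[of i] by (simp add: tpm)
          moreover have "x = TV p (l!p - 1)" using pq True by simp
          ultimately show ?thesis using C3[of p i] pq i by simp
        next
          case False
          hence ql: "q + 1 < l!p" using pq by simp
          hence zz: "z = TV p (q+1)" using zq by (simp add: tpm)
          have "y \<in> {theta_pos l p (q + 1 - 1), theta_pos l p (q + 1 + 1)}" using z zz by (simp only: nbTV)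
          moreover have "theta_pos l p (q + 1 - 1) = x" using pq by (simp add: tpm)
          moreover have "q + 1 + 1 = q + 2" by simp
          ultimately have y2: "y = theta_pos l p (q + 2)" using xy by auto
          show ?thesis
          proof (cases "q + 2 = l!p")
            case True
            hence "y = TW" using y2 by (simp add: theta_pos_def)
            thus ?thesis using C2w[of p q] pq True by simp
          next
            case False
            hence "q + 2 < l!p" using ql by simp
            hence "y = TV p (q+2)" using y2 by (simp add: tpm)
            thus ?thesis using C2[of q p] pq \<open>q + 2 < l!p\<close> by simp
          qed
        qed
      qed
    qed
  qed
qed

lemma V_fin: "finite V"
proof -
  have "V \<subseteq> {TU, TW} \<union> (\<lambda>(i, j). TV i j) ` ({..<m} \<times> {..<sum_list l})"
  proof
    fix x assume x: "x \<in> V"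
    show "x \<in> {TU, TW} \<union> (\<lambda>(i, j). TV i j) ` ({..<m} \<times> {..<sum_list l})"
    proof (cases x)
      case (TV i j)
      hence a: "i < m" "j < l!i" using x unfolding V_def by (auto simp: TV_in_verts)
      hence "j < sum_list l" using elem_le_sum_list[of i l] by simp
      thus ?thesis using a TV by auto
    qed auto
  qed
  thus ?thesis by (rule finite_subset) auto
qed

lemma main: "equitably_choosable (theta_verts l) (graph_square (theta_verts l) (theta_adj l)) k"
proof -
  have symA: "theta_adj l y x" if "theta_adj l x y" for x y
    using that unfolding theta_adj_def by blast
  have "equitably_choosable V G k"
  proof (rule generic[where phi = phi and pos = posv])
    show "finite V" by (rule V_fin)
    show "G y x" if "G x y" for x y
      using that symA unfolding G_def graph_square_def by blast
    show "\<not> G x x" for x unfolding G_def graph_square_def by simp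
    show "0 < k" using k1 by simp
    show "inj_on phi {0..<k}" by (rule phi_inj)
    show "phi ` {0..<k} \<subseteq> V" using phi_img Fs_V by simp
    show "card {y \<in> V - phi ` {0..<k}. G (phi j) y} + j < k" if "j < k" for j
      using Kall[OF that] phi_img by simp
    show "inj_on posv (V - phi ` {0..<k})" using posv_inj phi_img by simp
    show "\<bar>posv x - posv y\<bar> < int k"
      if "x \<in> V - phi ` {0..<k}" "y \<in> V - phi ` {0..<k}" "G x y" for x y
    proof -
      have "\<bar>posv x - posv y\<bar> \<le> int m + 1" using band that phi_img by simp
      thus ?thesis using k1 by linarith
    qed
  qed
  thus ?thesis unfolding V_def G_def .
qed

end

theorem lemma3p4:
  fixes l :: "nat list" and k :: nat
  assumes "length l \<ge> 3"
    and "sorted l"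
    and "l ! 0 \<ge> 2"
    and "l ! 1 \<ge> 4"
    and "length l + 3 \<le> k" and "k \<le> 2 * length l + 1"
  shows "equitably_choosable (theta_verts l) (graph_square (theta_verts l) (theta_adj l)) k"
proof -
  interpret th l k using assms by unfold_locales
  show ?thesis by (rule main)
qed

end
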